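(* Let $\delta\in(0,1)$, $A>0$, $D>0$, $B>0$, and define $H(z)=Az-Bz^{1+\delta}-Dz^{1-\delta}$ for $z>0$, and $H^{\max}=\sup_{z>0}H(z)$. Then: (a) for $B\in(0,A^2/(4D))$ we have $H^{\max}>0$, the set $\{z>0: H(z)>0\}$ is an interval $(\mu,\nu)$, and $H^{\max}=H(z_0)$ for some $z_0\in(\mu,\nu)$; (b) $H^{\max}\to0^+$ and $\nu-\mu\to0^+$ as $B\to (A^2/(4D))^-$; (c) for every $p>0$ there is $B(p)\in(0,A^2/(4D))$ such that $H^{\max}=p$ when $B=B(p)$, and $B(p)\to A^2/(4D)$ as $p\to0^+$.
   Context: Here $\mu=\mu(B)$, $\nu=\nu(B)$ depend on $B$ (with $A,D,\delta$ fixed). *)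

theory Defs
  imports "HOL-Analysis.Analysis"
begin

definition H :: "real \<Rightarrow> real \<Rightarrow> real \<Rightarrow> real \<Rightarrow> real \<Rightarrow> real" where
  "H A B D \<delta> z = A * z - B * z powr (1 + \<delta>) - D * z powr (1 - \<delta>)"

definition Hmax :: "real \<Rightarrow> real \<Rightarrow> real \<Rightarrow> real \<Rightarrow> real" where
  "Hmax A B D \<delta> = (SUP z\<in>{0<..}. H A B D \<delta> z)"

end

theory Submission
  imports Defs
begin

lemma ivl_eq_iff:
  fixes r s t u::real
  shows "({r<..<s} = {t<..<u}) = (r \<ge> s \<and> u \<le> t \<or> r = t \<and> s = u)"
  by (metis cInf_greaterThanLessThan cSup_greaterThanLessThan greaterThanLessThan_empty_iff not_le)

context
  fixes A D \<delta> :: real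
  assumes d0: "0 < \<delta>" and d1: "\<delta> < 1" and A0: "0 < A" and D0: "0 < D"
begin

lemma H_factor:
  assumes z: "0 < z"
  shows "H A B D \<delta> z = z * (A - B * z powr \<delta> - D / z powr \<delta>)"
proof -
  have p: "z powr \<delta> > 0" using z by simp
  have "z powr (1+\<delta>) = z * z powr \<delta>" using z by (simp add: powr_add)
  moreover have "z powr (1-\<delta>) = z / z powr \<delta>" using z by (simp add: powr_diff)
  ultimately show ?thesis unfolding H_def using p by (simp add: field_simps)
qed

definition "sB B = sqrt (A\<^sup>2 - 4*B*D)"
definition "tm B = (A - sB B) / (2*B)"
definition "tp B = (A + sB B) / (2*B)"

lemma roots:
  assumes B: "0 < B" "B < A\<^sup>2/(4*D)"
  shows "0 < tm B" "tm B < tp B" "\<And>t. 0 < t \<Longrightarrow> (A - B*t - D/t > 0 \<longleftrightarrow> tm B < t \<and> t < tp B)"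
proof -
  have disc: "A\<^sup>2 - 4*B*D > 0" using B D0 by (simp add: field_simps)
  have s0: "sB B > 0" unfolding sB_def using disc by simp
  have s2: "(sB B)\<^sup>2 = A\<^sup>2 - 4*B*D" unfolding sB_def using disc by simp
  have sA: "sB B < A"
  proof -
    have "(sB B)\<^sup>2 < A\<^sup>2" using s2 B D0 by simp
    thus ?thesis using A0 s0 by (smt (verit) power_mono)
  qed
  show "0 < tm B" unfolding tm_def using sA B by simp
  show lt: "tm B < tp B" unfolding tm_def tp_def using s0 B by (simp add: divide_strict_right_mono)
  fix t :: real assume t: "0 < t"
  have id: "B*(t - tm B)*(t - tp B) = B*t\<^sup>2 - A*t + D"
  proof -
    have ss: "sB B * sB B = A*A - 4*B*D" using s2 by (simp add: power2_eq_square)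
    show ?thesis
    unfolding tm_def tp_def using B by (simp add: field_simps power2_eq_square) (simp add: ss algebra_simps)
  qed
  have "A - B*t - D/t > 0 \<longleftrightarrow> B*t\<^sup>2 - A*t + D < 0"
  proof -
    have "A - B*t - D/t = -(B*t\<^sup>2 - A*t + D)/t" using t by (simp add: field_simps power2_eq_square)
    thus ?thesis using t by (simp add: zero_less_divide_iff) linarith
  qed
  also have "\<dots> \<longleftrightarrow> B*((t - tm B)*(t - tp B)) < 0" using id by (simp add: mult.assoc)
  also have "\<dots> \<longleftrightarrow> (t - tm B)*(t - tp B) < 0" using B by (simp add: mult_less_0_iff)
  also have "\<dots> \<longleftrightarrow> tm B < t \<and> t < tp B" using lt by (auto simp: mult_less_0_iff)
  finally show "A - B*t - D/t > 0 \<longleftrightarrow> tm B < t \<and> t < tp B" .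
qed


lemma powr_less_iff': "0 \<le> (a::real) \<Longrightarrow> 0 \<le> b \<Longrightarrow> 0 < (e::real) \<Longrightarrow> a powr e < b powr e \<longleftrightarrow> a < b"
  using powr_less_mono2[of e a b] powr_mono2[of e b a] by (auto simp: not_less[symmetric])

definition "mu B = tm B powr (1/\<delta>)"
definition "nu B = tp B powr (1/\<delta>)"

lemma Hset:
  assumes B: "0 < B" "B < A\<^sup>2/(4*D)"
  shows "0 < mu B" "mu B < nu B" "{z. 0 < z \<and> H A B D \<delta> z > 0} = {mu B<..<nu B}"
proof -
  note r = roots[OF B]
  show "0 < mu B" unfolding mu_def using r by simp
  show "mu B < nu B" unfolding mu_def nu_def using r d0 by (simp add: powr_less_mono2)
  have *: "0 < z \<Longrightarrow> (H A B D \<delta> z > 0 \<longleftrightarrow> mu B < z \<and> z < nu B)" for z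
  proof -
    assume z: "0 < z"
    have t: "z powr \<delta> > 0" using z by simp
    have zz: "(z powr \<delta>) powr (1/\<delta>) = z" using z d0 by (simp add: powr_powr)
    have "H A B D \<delta> z > 0 \<longleftrightarrow> A - B * z powr \<delta> - D / z powr \<delta> > 0"
      using H_factor[OF z] z by (simp add: zero_less_mult_iff)
    also have "\<dots> \<longleftrightarrow> tm B < z powr \<delta> \<and> z powr \<delta> < tp B" using r(3)[OF t] .
    also have "\<dots> \<longleftrightarrow> mu B < z \<and> z < nu B"
      unfolding mu_def nu_def using powr_less_iff'[of "tm B" "z powr \<delta>" "1/\<delta>"]
        powr_less_iff'[of "z powr \<delta>" "tp B" "1/\<delta>"] r d0 zz by auto
    finally show ?thesis .
  qed
  show "{z. 0 < z \<and> H A B D \<delta> z > 0} = {mu B<..<nu B}"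
  proof (intro set_eqI iffI)
    fix z assume "z \<in> {z. 0 < z \<and> H A B D \<delta> z > 0}"
    thus "z \<in> {mu B<..<nu B}" using *[of z] by simp
  next
    fix z assume zi: "z \<in> {mu B<..<nu B}"
    hence "0 < z" using \<open>0 < mu B\<close> by simp
    thus "z \<in> {z. 0 < z \<and> H A B D \<delta> z > 0}" using *[of z] zi by simp
  qed
qed

lemma Hpos_bound:
  assumes "0 < z" "H A B D \<delta> z > 0"
  shows "B * z powr \<delta> < A"
proof -
  have "A - B * z powr \<delta> - D / z powr \<delta> > 0"
    using H_factor[OF assms(1)] assms by (simp add: zero_less_mult_iff)
  moreover have "D / z powr \<delta> > 0" using D0 assms by simp
  ultimately show ?thesis by linarith
qed

lemma Hmax_attained:
  assumes B: "0 < B" "B < A\<^sup>2/(4*D)"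
  shows "\<exists>z0. mu B < z0 \<and> z0 < nu B \<and> Hmax A B D \<delta> = H A B D \<delta> z0 \<and> (\<forall>z>0. H A B D \<delta> z \<le> H A B D \<delta> z0)"
proof -
  note hs = Hset[OF B]
  have cont: "continuous_on {mu B..nu B} (H A B D \<delta>)"
    unfolding H_def using hs(1) by (intro continuous_intros) auto
  obtain z0 where z0: "z0 \<in> {mu B..nu B}" "\<And>y. y \<in> {mu B..nu B} \<Longrightarrow> H A B D \<delta> y \<le> H A B D \<delta> z0"
    using continuous_attains_sup[OF compact_Icc _ cont] hs(2) by auto
  define m where "m = (mu B + nu B)/2"
  have m: "m \<in> {mu B<..<nu B}" unfolding m_def using hs(2) by auto
  hence "m \<in> {z. 0 < z \<and> H A B D \<delta> z > 0}" by (subst hs(3))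
  hence "H A B D \<delta> m > 0" by simp
  moreover have "H A B D \<delta> m \<le> H A B D \<delta> z0" using z0(2) m by auto
  ultimately have pos: "H A B D \<delta> z0 > 0" by linarith
  have "z0 > 0" using z0(1) hs(1) by auto
  hence "z0 \<in> {z. 0 < z \<and> H A B D \<delta> z > 0}" using pos by simp
  hence zin: "z0 \<in> {mu B<..<nu B}" by (subst hs(3)[symmetric])
  have all: "\<forall>z>0. H A B D \<delta> z \<le> H A B D \<delta> z0"
  proof (intro allI impI)
    fix z :: real assume z: "0 < z"
    show "H A B D \<delta> z \<le> H A B D \<delta> z0"
    proof (cases "z \<in> {mu B..nu B}")
      case True thus ?thesis using z0(2) by blast
    next
      case False
      hence "z \<notin> {mu B<..<nu B}" by auto
      hence "z \<notin> {z. 0 < z \<and> H A B D \<delta> z > 0}" by (subst hs(3))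
      thus ?thesis using z pos by auto
    qed
  qed
  have "Hmax A B D \<delta> = H A B D \<delta> z0"
    unfolding Hmax_def
    by (rule cSup_eq_maximum) (use zin hs(1) all in auto)
  thus ?thesis using zin all by auto
qed


lemma Hmax_props:
  assumes B: "0 < B" "B < A\<^sup>2/(4*D)"
  shows "\<exists>z0>0. Hmax A B D \<delta> = H A B D \<delta> z0 \<and> H A B D \<delta> z0 > 0 \<and> B * z0 powr \<delta> < A
           \<and> (\<forall>z>0. H A B D \<delta> z \<le> Hmax A B D \<delta>)"
proof -
  obtain z0 where z: "mu B < z0" "z0 < nu B" "Hmax A B D \<delta> = H A B D \<delta> z0" "\<forall>z>0. H A B D \<delta> z \<le> H A B D \<delta> z0"
    using Hmax_attained[OF B] by blast
  note hs = Hset[OF B]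
  have z0: "z0 > 0" using z hs by simp
  have "z0 \<in> {mu B<..<nu B}" using z by simp
  hence "z0 \<in> {z. 0 < z \<and> H A B D \<delta> z > 0}" by (subst hs(3))
  hence pos: "H A B D \<delta> z0 > 0" by simp
  show ?thesis using z z0 pos Hpos_bound[OF z0 pos] by auto
qed

lemma Hmax_pos: "0 < B \<Longrightarrow> B < A\<^sup>2/(4*D) \<Longrightarrow> Hmax A B D \<delta> > 0"
  using Hmax_props by metis

lemma Hmax_ge: "0 < B \<Longrightarrow> B < A\<^sup>2/(4*D) \<Longrightarrow> 0 < z \<Longrightarrow> H A B D \<delta> z \<le> Hmax A B D \<delta>"
  using Hmax_props by metis

lemma H_diff: "H A B D \<delta> z - H A B' D \<delta> z = (B' - B) * z powr (1+\<delta>)"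
  unfolding H_def by (simp add: algebra_simps)

lemma Hmax_mono:
  assumes "0 < B1" "B1 \<le> B2" "B2 < A\<^sup>2/(4*D)"
  shows "Hmax A B2 D \<delta> \<le> Hmax A B1 D \<delta>"
proof -
  obtain z0 where z0: "z0 > 0" "Hmax A B2 D \<delta> = H A B2 D \<delta> z0"
    using Hmax_props[of B2] assms by auto
  have "H A B2 D \<delta> z0 \<le> H A B1 D \<delta> z0"
  proof -
    have "B1 * z0 powr (1+\<delta>) \<le> B2 * z0 powr (1+\<delta>)" using assms by (intro mult_right_mono) auto
    thus ?thesis using H_diff[of B1 z0 B2] by (simp add: algebra_simps)
  qed
  also have "\<dots> \<le> Hmax A B1 D \<delta>" using Hmax_ge[of B1 z0] assms z0 by simp
  finally show ?thesis using z0 by simp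
qed

definition "M a = (A/a) powr (1/\<delta>) * (A/a)"

lemma zbound:
  assumes "0 < a" "a \<le> B" "0 < z" "B * z powr \<delta> < A"
  shows "z powr (1+\<delta>) \<le> M a" "z \<le> (A/a) powr (1/\<delta>)"
proof -
  have t: "z powr \<delta> \<le> A/a"
  proof -
    have "a * z powr \<delta> \<le> B * z powr \<delta>" using assms by (simp add: mult_right_mono)
    hence "a * z powr \<delta> \<le> A" using assms by linarith
    thus ?thesis using assms by (simp add: field_simps)
  qed
  have "z = (z powr \<delta>) powr (1/\<delta>)" using assms d0 by (simp add: powr_powr)
  also have "\<dots> \<le> (A/a) powr (1/\<delta>)" using t d0 by (intro powr_mono2) auto
  finally show zb: "z \<le> (A/a) powr (1/\<delta>)" .
  have "z powr (1+\<delta>) = z * z powr \<delta>" using assms by (simp add: powr_add)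
  also have "\<dots> \<le> (A/a) powr (1/\<delta>) * (A/a)" using zb t assms by (intro mult_mono) auto
  finally show "z powr (1+\<delta>) \<le> M a" unfolding M_def .
qed

lemma Hmax_lip:
  assumes "0 < a" "a \<le> B" "a \<le> B'" "B < A\<^sup>2/(4*D)" "B' < A\<^sup>2/(4*D)"
  shows "Hmax A B' D \<delta> - Hmax A B D \<delta> \<le> M a * \<bar>B - B'\<bar>"
proof -
  obtain z1 where z1: "z1 > 0" "Hmax A B' D \<delta> = H A B' D \<delta> z1" "B' * z1 powr \<delta> < A"
    using Hmax_props[of B'] assms by auto
  have w: "z1 powr (1+\<delta>) \<le> M a" using zbound[OF assms(1,3) z1(1,3)] by simp
  have w0: "z1 powr (1+\<delta>) \<ge> 0" by simp
  have "H A B' D \<delta> z1 - H A B D \<delta> z1 = (B - B') * z1 powr (1+\<delta>)" using H_diff[of B' z1 B] .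
  also have "\<dots> \<le> \<bar>B - B'\<bar> * M a"
  proof -
    have "(B - B') * z1 powr (1+\<delta>) \<le> \<bar>B - B'\<bar> * z1 powr (1+\<delta>)" using w0 by (intro mult_right_mono) auto
    also have "\<dots> \<le> \<bar>B - B'\<bar> * M a" using w by (intro mult_left_mono) auto
    finally show ?thesis .
  qed
  finally have "H A B' D \<delta> z1 - H A B D \<delta> z1 \<le> \<bar>B - B'\<bar> * M a" .
  moreover have "H A B D \<delta> z1 \<le> Hmax A B D \<delta>" using Hmax_ge[of B z1] assms z1 by simp
  ultimately show ?thesis using z1 by (simp add: mult.commute)
qed

lemma Hmax_cont:
  assumes "0 < a" "c < A\<^sup>2/(4*D)"
  shows "continuous_on {a..c} (\<lambda>B. Hmax A B D \<delta>)"
proof (rule lipschitz_on_continuous_on[where L="M a"], rule lipschitz_onI)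
  show "0 \<le> M a" unfolding M_def using assms A0 by simp
  fix x y assume "x \<in> {a..c}" "y \<in> {a..c}"
  hence "Hmax A x D \<delta> - Hmax A y D \<delta> \<le> M a * \<bar>y - x\<bar>" "Hmax A y D \<delta> - Hmax A x D \<delta> \<le> M a * \<bar>x - y\<bar>"
    using Hmax_lip[of a y x] Hmax_lip[of a x y] assms by auto
  thus "dist (Hmax A x D \<delta>) (Hmax A y D \<delta>) \<le> M a * dist x y"
    by (simp add: dist_real_def abs_minus_commute abs_le_iff)
qed


lemma amgm:
  assumes "0 < B" "0 < t"
  shows "2 * sqrt (B*D) \<le> B*t + D/t"
proof -
  have "(B*t + D/t)\<^sup>2 = (B*t - D/t)\<^sup>2 + 4*B*D" using assms by (simp add: field_simps power2_eq_square)
  hence "4*(B*D) \<le> (B*t + D/t)\<^sup>2" by (simp add: algebra_simps)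
  hence "sqrt (4*(B*D)) \<le> B*t + D/t" using assms D0 by (simp add: real_sqrt_le_iff real_le_lsqrt real_sqrt_le_mono real_le_rsqrt sqrt_le_D)
  thus ?thesis by (simp add: real_sqrt_mult)
qed

lemma B0pos: "A\<^sup>2/(4*D) > 0" using A0 D0 by simp

lemma Hmax_upper:
  assumes "A\<^sup>2/(4*D)/2 \<le> B" "B < A\<^sup>2/(4*D)"
  shows "Hmax A B D \<delta> \<le> (A/(A\<^sup>2/(4*D)/2)) powr (1/\<delta>) * (A - 2* sqrt(B*D))"
proof -
  have a0: "A\<^sup>2/(4*D)/2 > 0" using B0pos by simp
  have B: "0 < B" using assms a0 by linarith
  obtain z0 where z0: "z0 > 0" "Hmax A B D \<delta> = H A B D \<delta> z0" "H A B D \<delta> z0 > 0" "B * z0 powr \<delta> < A"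
    using Hmax_props[of B] B assms by metis
  have zb: "z0 \<le> (A/(A\<^sup>2/(4*D)/2)) powr (1/\<delta>)" using zbound(2)[OF a0 assms(1) z0(1) z0(4)] .
  define q where "q = A - B * z0 powr \<delta> - D / z0 powr \<delta>"
  have Hq: "H A B D \<delta> z0 = z0 * q" unfolding q_def using H_factor[OF z0(1)] .
  have q0: "q > 0" using z0 Hq by (simp add: zero_less_mult_iff)
  have "q \<le> A - 2* sqrt(B*D)" unfolding q_def using amgm[OF B, of "z0 powr \<delta>"] z0 by simp
  hence "z0 * q \<le> (A/(A\<^sup>2/(4*D)/2)) powr (1/\<delta>) * (A - 2* sqrt(B*D))"
    using zb q0 z0 by (intro mult_mono) auto
  thus ?thesis using z0 Hq by simp
qed

lemma Hmax_lim: "filterlim (\<lambda>B. Hmax A B D \<delta>) (at_right 0) (at_left (A\<^sup>2 / (4 * D)))"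
proof -
  define B0 where "B0 = A\<^sup>2 / (4 * D)"
  have B0: "B0 > 0" unfolding B0_def using B0pos .
  define K where "K = (A/(B0/2)) powr (1/\<delta>)"
  have ev: "eventually (\<lambda>B. B \<in> {B0/2<..<B0}) (at_left B0)" using B0 by (intro eventually_at_left_real) simp
  have pos: "eventually (\<lambda>B. Hmax A B D \<delta> \<in> {0<..} \<and> Hmax A B D \<delta> \<noteq> 0) (at_left B0)"
  proof -
    have h: "Hmax A B D \<delta> > 0" if "B \<in> {B0/2<..<B0}" for B
    proof -
      have "0 < B" "B < B0" using that B0 by auto
      thus ?thesis using Hmax_pos B0_def by simp
    qed
    show ?thesis using ev by eventually_elim (frule h, simp)
  qed
  have "((\<lambda>B. K * (A - 2* sqrt(B*D))) \<longlongrightarrow> K * (A - 2* sqrt(B0*D))) (at_left B0)"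
    by (intro tendsto_intros)
  moreover have "sqrt(B0*D) = A/2"
  proof -
    have "B0*D = (A/2)\<^sup>2" unfolding B0_def using D0 by (simp add: field_simps power2_eq_square)
    thus ?thesis using A0 by simp
  qed
  ultimately have lim: "((\<lambda>B. K * (A - 2* sqrt(B*D))) \<longlongrightarrow> 0) (at_left B0)" by simp
  have "((\<lambda>B. Hmax A B D \<delta>) \<longlongrightarrow> 0) (at_left B0)"
  proof (rule real_tendsto_sandwich[OF _ _ tendsto_const lim])
    show "eventually (\<lambda>B. 0 \<le> Hmax A B D \<delta>) (at_left B0)" using pos by eventually_elim auto
    show "eventually (\<lambda>B. Hmax A B D \<delta> \<le> K * (A - 2* sqrt(B*D))) (at_left B0)"
      using ev by eventually_elim (use Hmax_upper B0_def K_def in auto)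
  qed
  thus ?thesis unfolding B0_def[symmetric] filterlim_at using pos by simp
qed


lemma gap_lim: "filterlim (\<lambda>B. nu B - mu B) (at_right 0) (at_left (A\<^sup>2 / (4 * D)))"
proof -
  define B0 where "B0 = A\<^sup>2 / (4 * D)"
  have B0: "B0 > 0" unfolding B0_def using B0pos .
  have e0: "A\<^sup>2 - 4*B0*D = 0" unfolding B0_def using D0 by simp
  have "((\<lambda>B. sqrt (A\<^sup>2 - 4*B*D)) \<longlongrightarrow> sqrt (A\<^sup>2 - 4*B0*D)) (at_left B0)"
    by (intro tendsto_intros)
  hence s: "(sB \<longlongrightarrow> 0) (at_left B0)" unfolding sB_def using e0 by simp
  have c: "A/(2*B0) \<noteq> 0" using A0 B0 by simp
  have "((\<lambda>B. tm B) \<longlongrightarrow> (A - 0)/(2*B0)) (at_left B0)" unfolding tm_def using B0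
    by (intro tendsto_intros s) auto
  hence "((\<lambda>B. mu B) \<longlongrightarrow> (A/(2*B0)) powr (1/\<delta>)) (at_left B0)" unfolding mu_def using c
    by (intro tendsto_powr) auto
  moreover have "((\<lambda>B. tp B) \<longlongrightarrow> (A + 0)/(2*B0)) (at_left B0)" unfolding tp_def using B0
    by (intro tendsto_intros s) auto
  hence "((\<lambda>B. nu B) \<longlongrightarrow> (A/(2*B0)) powr (1/\<delta>)) (at_left B0)" unfolding nu_def using c
    by (intro tendsto_powr) auto
  ultimately have lim: "((\<lambda>B. nu B - mu B) \<longlongrightarrow> 0) (at_left B0)"
    using tendsto_diff by fastforce
  have ev: "eventually (\<lambda>B. B \<in> {0<..<B0}) (at_left B0)" using B0 by (intro eventually_at_left_real)
  have h: "nu B - mu B \<in> {0<..} \<and> nu B - mu B \<noteq> 0" if "B \<in> {0<..<B0}" for B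
  proof -
    have "0 < B" "B < A\<^sup>2/(4*D)" using that B0_def by auto
    thus ?thesis using Hset(2)[of B] by simp
  qed
  have "eventually (\<lambda>B. nu B - mu B \<in> {0<..} \<and> nu B - mu B \<noteq> 0) (at_left B0)"
    using ev by eventually_elim (rule h)
  thus ?thesis unfolding B0_def[symmetric] filterlim_at using lim by simp
qed

lemma exists_B:
  assumes p: "p > 0"
  shows "\<exists>B. 0 < B \<and> B < A\<^sup>2/(4*D) \<and> Hmax A B D \<delta> = p"
proof -
  define B0 where "B0 = A\<^sup>2 / (4 * D)"
  have B0: "B0 > 0" unfolding B0_def using B0pos .
  define z where "z = max ((2*D/A) powr (1/\<delta>)) (4*p/A)"
  have z0: "z > 0" unfolding z_def using p A0 by (simp add: less_max_iff_disj)
  have tz: "z powr \<delta> \<ge> 2*D/A"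
  proof -
    have "(2*D/A) = ((2*D/A) powr (1/\<delta>)) powr \<delta>" using A0 D0 d0 by (simp add: powr_powr)
    also have "\<dots> \<le> z powr \<delta>" unfolding z_def using d0 by (intro powr_mono2) auto
    finally show ?thesis .
  qed
  have tpos: "z powr \<delta> > 0" using z0 by simp
  have zp: "A*z \<ge> 4*p"
  proof -
    have "z \<ge> 4*p/A" unfolding z_def by simp
    hence "A*z \<ge> A*(4*p/A)" using A0 by (intro mult_left_mono) auto
    thus ?thesis using A0 by simp
  qed
  define B1 where "B1 = min (B0/2) (p / z powr (1+\<delta>))"
  have B1: "0 < B1" "B1 < B0" unfolding B1_def using B0 p z0 by auto
  have Dt: "D / z powr \<delta> \<le> A/2" using tz tpos A0 D0 by (simp add: field_simps)
  have Bz: "B1 * z powr (1+\<delta>) \<le> p"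
  proof -
    have "B1 * z powr (1+\<delta>) \<le> (p / z powr (1+\<delta>)) * z powr (1+\<delta>)"
      unfolding B1_def by (intro mult_right_mono) auto
    thus ?thesis using z0 by simp
  qed
  have "H A B1 D \<delta> z = A*z - B1 * z powr (1+\<delta>) - z * (D / z powr \<delta>)"
    unfolding H_def using z0 by (simp add: powr_diff)
  also have "\<dots> \<ge> A*z - p - z*(A/2)" using Bz Dt z0 mult_left_mono[OF Dt, of z] by linarith
  finally have "H A B1 D \<delta> z \<ge> p" using zp by (simp add: algebra_simps)
  hence hp1: "Hmax A B1 D \<delta> \<ge> p" using Hmax_ge[of B1 z] B1 z0 B0_def by simp
  have "eventually (\<lambda>B. Hmax A B D \<delta> < p) (at_left B0)"
    using Hmax_lim p unfolding B0_def[symmetric] filterlim_at by (auto simp: order_tendsto_iff)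
  moreover have "eventually (\<lambda>B. B \<in> {B1<..<B0}) (at_left B0)" using B1 by (intro eventually_at_left_real)
  ultimately have evc: "eventually (\<lambda>B. Hmax A B D \<delta> < p \<and> B \<in> {B1<..<B0}) (at_left B0)"
    by (rule eventually_conj)
  obtain B2 where B2: "Hmax A B2 D \<delta> < p" "B1 < B2" "B2 < B0"
    using eventually_happens[OF evc] by auto
  have "continuous_on {B1..B2} (\<lambda>B. Hmax A B D \<delta>)"
    using Hmax_cont[of B1 B2] B1 B2 B0_def by simp
  then obtain B where BB: "B1 \<le> B" "B \<le> B2" "Hmax A B D \<delta> = p"
    using IVT2'[of "\<lambda>B. Hmax A B D \<delta>" B2 p B1] B2 hp1 by auto
  have "0 < B" "B < A\<^sup>2/(4*D)" using BB B1 B2 B0_def by auto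
  thus ?thesis using BB(3) by blast
qed


lemma partA: "\<forall>B. 0 < B \<and> B < A\<^sup>2 / (4 * D) \<longrightarrow>
        Hmax A B D \<delta> > 0 \<and>
        (\<exists>\<mu> \<nu>. \<mu> < \<nu> \<and> {z. 0 < z \<and> H A B D \<delta> z > 0} = {\<mu><..<\<nu>} \<and>
                (\<exists>z0\<in>{\<mu><..<\<nu>}. Hmax A B D \<delta> = H A B D \<delta> z0))"
proof (intro allI impI)
  fix B assume B: "0 < B \<and> B < A\<^sup>2 / (4 * D)"
  obtain z0 where "mu B < z0" "z0 < nu B" "Hmax A B D \<delta> = H A B D \<delta> z0"
    using Hmax_attained[of B] B by blast
  thus "Hmax A B D \<delta> > 0 \<and>
        (\<exists>\<mu> \<nu>. \<mu> < \<nu> \<and> {z. 0 < z \<and> H A B D \<delta> z > 0} = {\<mu><..<\<nu>} \<and>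
                (\<exists>z0\<in>{\<mu><..<\<nu>}. Hmax A B D \<delta> = H A B D \<delta> z0))"
  proof (intro conjI exI bexI)
    show "Hmax A B D \<delta> > 0" using Hmax_pos[of B] B by simp
    show "mu B < nu B" using Hset(2)[of B] B by simp
    show "{z. 0 < z \<and> H A B D \<delta> z > 0} = {mu B<..<nu B}" using Hset(3)[of B] B by simp
    show "z0 \<in> {mu B<..<nu B}" using \<open>mu B < z0\<close> \<open>z0 < nu B\<close> by simp
  qed simp
qed

lemma partC: "\<forall>\<mu> \<nu> :: real \<Rightarrow> real.
         (\<forall>B. 0 < B \<and> B < A\<^sup>2 / (4 * D) \<longrightarrow>
              {z. 0 < z \<and> H A B D \<delta> z > 0} = {\<mu> B<..<\<nu> B}) \<longrightarrow>
         filterlim (\<lambda>B. \<nu> B - \<mu> B) (at_right 0) (at_left (A\<^sup>2 / (4 * D)))"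
proof (intro allI impI)
  fix \<mu> \<nu> :: "real \<Rightarrow> real"
  assume h: "\<forall>B. 0 < B \<and> B < A\<^sup>2 / (4 * D) \<longrightarrow> {z. 0 < z \<and> H A B D \<delta> z > 0} = {\<mu> B<..<\<nu> B}"
  have eq: "nu B - mu B = \<nu> B - \<mu> B" if "B \<in> {0<..<A\<^sup>2 / (4 * D)}" for B
  proof -
    have B: "0 < B" "B < A\<^sup>2 / (4 * D)" using that by auto
    note e1 = h[rule_format, OF conjI[OF B]]
    have "{\<mu> B<..<\<nu> B} = {mu B<..<nu B}" using e1 Hset(3)[OF B] by (rule trans[OF sym])
    hence "(\<nu> B \<le> \<mu> B \<and> nu B \<le> mu B) \<or> (\<mu> B = mu B \<and> \<nu> B = nu B)" by (simp only: ivl_eq_iff)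
    hence "\<mu> B = mu B \<and> \<nu> B = nu B" using Hset(2)[OF B] by linarith
    thus ?thesis by simp
  qed
  have ev: "eventually (\<lambda>B. nu B - mu B = \<nu> B - \<mu> B) (at_left (A\<^sup>2 / (4 * D)))"
    using eventually_at_left_real[OF B0pos] by (rule eventually_mono) (rule eq)
  show "filterlim (\<lambda>B. \<nu> B - \<mu> B) (at_right 0) (at_left (A\<^sup>2 / (4 * D)))"
    by (rule iffD1[OF filterlim_cong[OF refl refl ev] gap_lim])
qed

lemma partD: "\<exists>Bp :: real \<Rightarrow> real.
         (\<forall>p>0. 0 < Bp p \<and> Bp p < A\<^sup>2 / (4 * D) \<and> Hmax A (Bp p) D \<delta> = p) \<and>
         (Bp \<longlongrightarrow> A\<^sup>2 / (4 * D)) (at_right 0)"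
proof -
  define B0 where "B0 = A\<^sup>2 / (4 * D)"
  have B0: "B0 > 0" unfolding B0_def using B0pos .
  have "\<forall>p. \<exists>B. p > 0 \<longrightarrow> 0 < B \<and> B < B0 \<and> Hmax A B D \<delta> = p"
    using exists_B B0_def by blast
  then obtain Bp where Bp: "\<And>p. p > 0 \<Longrightarrow> 0 < Bp p \<and> Bp p < B0 \<and> Hmax A (Bp p) D \<delta> = p"
    by metis
  have "(Bp \<longlongrightarrow> B0) (at_right 0)"
  proof (rule order_tendstoI)
    fix a assume "a > B0"
    show "eventually (\<lambda>p. Bp p < a) (at_right 0)"
    proof -
      have "Bp p < a" if "p \<in> {0<..<1}" for p :: real
      proof -
        have "p > 0" using that by simp
        thus ?thesis using Bp[of p] \<open>a > B0\<close> by linarith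
      qed
      thus ?thesis using eventually_at_right_real[of 0 1] by (auto elim: eventually_mono)
    qed
  next
    fix a assume a: "a < B0"
    define c where "c = max a (B0/2)"
    have c: "0 < c" "c < B0" "a \<le> c" unfolding c_def using a B0 by auto
    define h where "h = Hmax A c D \<delta>"
    have h: "h > 0" unfolding h_def using Hmax_pos c B0_def by simp
    have "a < Bp p" if p: "p \<in> {0<..<h}" for p
    proof (rule ccontr)
      assume "\<not> a < Bp p"
      hence "Bp p \<le> c" using c by linarith
      hence "Hmax A c D \<delta> \<le> Hmax A (Bp p) D \<delta>" using Hmax_mono[of "Bp p" c] Bp[of p] p c B0_def by auto
      thus False using Bp[of p] p h_def by auto
    qed
    thus "eventually (\<lambda>p. a < Bp p) (at_right 0)"
      using eventually_at_right_real[OF h] by (auto elim: eventually_mono)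
  qed
  thus ?thesis using Bp B0_def by blast
qed

end

theorem lemma3p2:
  fixes A D \<delta> :: real
  assumes "0 < \<delta>" "\<delta> < 1" "0 < A" "0 < D"
  shows
   "(\<forall>B. 0 < B \<and> B < A\<^sup>2 / (4 * D) \<longrightarrow>
        Hmax A B D \<delta> > 0 \<and>
        (\<exists>\<mu> \<nu>. \<mu> < \<nu> \<and> {z. 0 < z \<and> H A B D \<delta> z > 0} = {\<mu><..<\<nu>} \<and>
                (\<exists>z0\<in>{\<mu><..<\<nu>}. Hmax A B D \<delta> = H A B D \<delta> z0)))
    \<and> filterlim (\<lambda>B. Hmax A B D \<delta>) (at_right 0) (at_left (A\<^sup>2 / (4 * D)))
    \<and> (\<forall>\<mu> \<nu> :: real \<Rightarrow> real.
         (\<forall>B. 0 < B \<and> B < A\<^sup>2 / (4 * D) \<longrightarrow>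
              {z. 0 < z \<and> H A B D \<delta> z > 0} = {\<mu> B<..<\<nu> B}) \<longrightarrow>
         filterlim (\<lambda>B. \<nu> B - \<mu> B) (at_right 0) (at_left (A\<^sup>2 / (4 * D))))
    \<and> (\<exists>Bp :: real \<Rightarrow> real.
         (\<forall>p>0. 0 < Bp p \<and> Bp p < A\<^sup>2 / (4 * D) \<and> Hmax A (Bp p) D \<delta> = p) \<and>
         (Bp \<longlongrightarrow> A\<^sup>2 / (4 * D)) (at_right 0))"
  by (intro conjI partA[OF assms] Hmax_lim[OF assms] partC[OF assms] partD[OF assms])

end
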